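(* Let $n,k_1,k_2$ be nonnegative integers with $k_1+k_2\le n$ and $\ell=n-k_1-k_2$. Let $C$ be a $\mathbb{Z}_4$-code of length $n$ and type $4^{k_1}2^{k_2}$ which is inequivalent to the trivial extension of any $\mathbb{Z}_4$-code of length $n-1$ and type $4^{k_1}2^{k_2}$. Then there is a $\mathbb{Z}_4$-code $C'$ of length $n$ and type $4^{k_1}2^{k_2}$ with $C\cong C'$ having a generator matrix $G(A,B,D)\in\mathcal{V}$ such that the matrix $\begin{pmatrix}B\\2D\end{pmatrix}$ has no zero column.
   Context: $\mathbb{Z}_4=\{0,1,2,3\}$ is the ring of integers modulo $4$; a $\mathbb{Z}_4$-code of length $n$ is a submodule of $\mathbb{Z}_4^n$, and two codes are equivalent ($\cong$) if one is obtained from the other by permuting coordinates and changing the signs of some coordinates. A code has type $4^{k_1}2^{k_2}$ if it is permutation-equivalent to a code with generator matrix $G(A,B,D)=\begin{pmatrix} I_{k_1} & A & B\\ O & 2I_{k_2} & 2D\end{pmatrix}$ with $A$ a $k_1\times k_2$ $(0,1)$-matrix, $D$ a $k_2\times\ell$ $(0,1)$-matrix, $B$ a $k_1\times\ell$ $\mathbb{Z}_4$-matrix. The trivial extension of a code $C_0$ of length $n-1$ is $\{(c,0)\mid c\in C_0\}$. Order $\mathbb{Z}_4$ by $0<1<2<3$ and order vectors lexicographically. Let $M_{m\times n}(R)$ denote the set of $m\times n$ matrices with entries in $R$. For $T\subset M_{m\times n}(\mathbb{Z}_4)$ let $P_{row}(T)$ be the set of matrices in $T$ whose rows $a_1,\dots,a_m$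 satisfy $a_i\le a_j$ whenever $i\le j$, and $P_{col}(T)$ the set of matrices in $T$ whose columns $b_1,\dots,b_n$ satisfy $b_i^T\le b_j^T$ whenever $i\le j$. Let $\mathcal{S}=\{G(A,B,D)\mid A\in M_{k_1\times k_2}(\{0,1\}),\ B\in M_{k_1\times\ell}(\mathbb{Z}_4),\ D\in M_{k_2\times\ell}(\{0,1\})\}$, $\mathcal{T}=\{G(A,B,D)\in\mathcal{S}\mid A\in P_{row}(M_{k_1\times k_2}(\{0,1\}))\}$. Let $\mathcal{B}$ be the set consisting of all $k_1\times\ell$ matrices with entries in $\{0,2\}$ together with all $k_1\times\ell$ $\mathbb{Z}_4$-matrices $B$ such that, for the smallest $i$ for which the $i$-th row of $B$ contains an entry not in $\{0,2\}$, the $i$-th row of $B$ has all entries in $\{0,1,2\}$. Let $\mathcal{U}=\{G(A,B,D)\in\mathcal{T}\mid B\in\mathcal{B}\}$ and $\mathcal{V}=\{G(A,B,D)\in\mathcal{U}\mid \begin{pmatrix}B\\2D\end{pmatrix}\in P_{col}(M_{(k_1+k_2)\times\ell}(\mathbb{Z}_4))\}$. *)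

theory Defs
  imports Main "HOL-Library.Numeral_Type" "HOL-Combinatorics.Permutations"
begin

text \<open>Z4 is the library type 4 (integers modulo 4), ordered 0 < 1 < 2 < 3.
  A vector of length n is a function nat => Z4 vanishing outside {..<n};
  an m x n matrix is a function nat => nat => Z4 (only entries with row < m,
  column < n are relevant).\<close>

type_synonym z4 = "4"
type_synonym z4vec = "nat \<Rightarrow> z4"
type_synonym z4mat = "nat \<Rightarrow> nat \<Rightarrow> z4"

definition vecs :: "nat \<Rightarrow> z4vec set" where
  "vecs n = {v. \<forall>i\<ge>n. v i = 0}"

definition is_code :: "nat \<Rightarrow> z4vec set \<Rightarrow> bool" where
  "is_code n C \<longleftrightarrow> C \<subseteq> vecs n \<and> (\<lambda>_. 0) \<in> C
     \<and> (\<forall>u\<in>C. \<forall>v\<in>C. (\<lambda>i. u i + v i) \<in> C)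
     \<and> (\<forall>a::z4. \<forall>v\<in>C. (\<lambda>i. a * v i) \<in> C)"

definition gen_code :: "nat \<Rightarrow> nat \<Rightarrow> z4mat \<Rightarrow> z4vec set" where
  "gen_code r n M = {(\<lambda>j. if j < n then (\<Sum>i<r. c i * M i j) else 0) | c. True}"

definition perm_equiv :: "nat \<Rightarrow> z4vec set \<Rightarrow> z4vec set \<Rightarrow> bool" where
  "perm_equiv n C C' \<longleftrightarrow> (\<exists>\<sigma>. \<sigma> permutes {..<n} \<and> C' = (\<lambda>v. v \<circ> \<sigma>) ` C)"

definition code_equiv :: "nat \<Rightarrow> z4vec set \<Rightarrow> z4vec set \<Rightarrow> bool" where
  "code_equiv n C C' \<longleftrightarrow> (\<exists>\<sigma> s. \<sigma> permutes {..<n} \<and> (\<forall>i. s i = 1 \<or> s i = (-1::z4))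
      \<and> C' = (\<lambda>v. \<lambda>i. s i * v (\<sigma> i)) ` C)"

definition Gmat :: "nat \<Rightarrow> nat \<Rightarrow> z4mat \<Rightarrow> z4mat \<Rightarrow> z4mat \<Rightarrow> z4mat" where
  "Gmat k1 k2 A B D = (\<lambda>i j.
     if i < k1 then
       (if j < k1 then (if i = j then 1 else 0)
        else if j < k1 + k2 then A i (j - k1)
        else B i (j - k1 - k2))
     else
       (if j < k1 then 0
        else if j < k1 + k2 then (if j - k1 = i - k1 then 2 else 0)
        else 2 * D (i - k1) (j - k1 - k2)))"

definition mat_over :: "nat \<Rightarrow> nat \<Rightarrow> z4 set \<Rightarrow> z4mat \<Rightarrow> bool" where
  "mat_over m n S M \<longleftrightarrow> (\<forall>i<m. \<forall>j<n. M i j \<in> S)"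

definition in_S :: "nat \<Rightarrow> nat \<Rightarrow> nat \<Rightarrow> z4mat \<Rightarrow> z4mat \<Rightarrow> z4mat \<Rightarrow> bool" where
  "in_S k1 k2 l A B D \<longleftrightarrow> mat_over k1 k2 {0,1} A \<and> mat_over k2 l {0,1} D"

definition has_type :: "nat \<Rightarrow> nat \<Rightarrow> nat \<Rightarrow> z4vec set \<Rightarrow> bool" where
  "has_type n k1 k2 C \<longleftrightarrow> k1 + k2 \<le> n \<and>
     (\<exists>A B D. in_S k1 k2 (n - k1 - k2) A B D \<and>
        perm_equiv n (gen_code (k1 + k2) n (Gmat k1 k2 A B D)) C)"

definition trivial_ext :: "nat \<Rightarrow> z4vec set \<Rightarrow> z4vec set" where
  "trivial_ext n C0 = {c(n - 1 := 0) | c. c \<in> C0}"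

definition lex_le :: "nat \<Rightarrow> z4vec \<Rightarrow> z4vec \<Rightarrow> bool" where
  "lex_le m u v \<longleftrightarrow> (\<forall>t<m. u t = v t) \<or>
     (\<exists>j<m. (\<forall>t<j. u t = v t) \<and> u j < v j)"

definition P_row :: "nat \<Rightarrow> nat \<Rightarrow> z4mat \<Rightarrow> bool" where
  "P_row m n M \<longleftrightarrow> (\<forall>i<m. \<forall>j<m. i \<le> j \<longrightarrow> lex_le n (M i) (M j))"

definition P_col :: "nat \<Rightarrow> nat \<Rightarrow> z4mat \<Rightarrow> bool" where
  "P_col m n M \<longleftrightarrow> (\<forall>i<n. \<forall>j<n. i \<le> j \<longrightarrow> lex_le m (\<lambda>r. M r i) (\<lambda>r. M r j))"

definition in_Bset :: "nat \<Rightarrow> nat \<Rightarrow> z4mat \<Rightarrow> bool" where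
  "in_Bset k1 l B \<longleftrightarrow> mat_over k1 l {0,2} B \<or>
     (\<exists>i<k1. (\<forall>i'<i. \<forall>j<l. B i' j \<in> {0,2}) \<and> (\<exists>j<l. B i j \<notin> {0,2})
         \<and> (\<forall>j<l. B i j \<in> {0,1,2}))"

definition stackBD :: "nat \<Rightarrow> z4mat \<Rightarrow> z4mat \<Rightarrow> z4mat" where
  "stackBD k1 B D = (\<lambda>i j. if i < k1 then B i j else 2 * D (i - k1) j)"

definition in_T :: "nat \<Rightarrow> nat \<Rightarrow> nat \<Rightarrow> z4mat \<Rightarrow> z4mat \<Rightarrow> z4mat \<Rightarrow> bool" where
  "in_T k1 k2 l A B D \<longleftrightarrow> in_S k1 k2 l A B D \<and> P_row k1 k2 A"

definition in_U :: "nat \<Rightarrow> nat \<Rightarrow> nat \<Rightarrow> z4mat \<Rightarrow> z4mat \<Rightarrow> z4mat \<Rightarrow> bool" where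
  "in_U k1 k2 l A B D \<longleftrightarrow> in_T k1 k2 l A B D \<and> in_Bset k1 l B"

definition in_V :: "nat \<Rightarrow> nat \<Rightarrow> nat \<Rightarrow> z4mat \<Rightarrow> z4mat \<Rightarrow> z4mat \<Rightarrow> bool" where
  "in_V k1 k2 l A B D \<longleftrightarrow> in_U k1 k2 l A B D \<and> P_col (k1 + k2) l (stackBD k1 B D)"

end

theory Submission
  imports Defs "HOL-Library.List_Lexorder"
begin


lemma sort_perm_exists:
  fixes f :: "nat \<Rightarrow> 'a::linorder"
  shows "\<exists>\<rho>. \<rho> permutes {..<l} \<and> (\<forall>i<l. \<forall>j<l. i \<le> j \<longrightarrow> f (\<rho> i) \<le> f (\<rho> j))"
proof -
  define ys where "ys = sort_key f [0..<l]"
  have "mset ys = mset [0..<l]" by (simp add: ys_def)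
  then obtain p where p: "p permutes {..<length [0..<l]}" "permute_list p [0..<l] = ys"
    by (metis mset_eq_permutation)
  have len: "length ys = l" by (simp add: ys_def)
  have ys: "\<And>i. i < l \<Longrightarrow> ys ! i = p i"
  proof -
    fix i assume i: "i < l"
    have "ys ! i = [0..<l] ! p i" using p(2)[symmetric] p(1) i by (simp add: permute_list_nth)
    moreover have "p i < l" using permutes_in_image[OF p(1)] i by simp
    ultimately show "ys ! i = p i" by simp
  qed
  have "sorted (map f ys)" by (simp add: ys_def)
  hence "\<forall>i<l. \<forall>j<l. i \<le> j \<longrightarrow> f (ys ! i) \<le> f (ys ! j)"
    using len by (auto simp: sorted_iff_nth_mono)
  thus ?thesis using p ys by (intro exI[of _ p]) auto
qed

lemma lex_from_list:
  fixes u v :: z4vec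
  assumes "map u [0..<m] \<le> map v [0..<m]"
  shows "lex_le m u v"
proof (cases "map u [0..<m] = map v [0..<m]")
  case True
  then show ?thesis by (auto simp: lex_le_def map_eq_conv)
next
  case False
  with assms have "(map u [0..<m], map v [0..<m]) \<in> lexord {(a,b). a < b}"
    unfolding list_le_def list_less_def by blast
  then obtain i where i: "i < m" "take i (map u [0..<m]) = take i (map v [0..<m])" "u i < v i"
    by (auto simp: lexord_take_index_conv)
  have "\<forall>t<i. u t = v t"
  proof (intro allI impI)
    fix t assume "t < i"
    hence "take i (map u [0..<m]) ! t = take i (map v [0..<m]) ! t" using i by simp
    thus "u t = v t" using \<open>t<i\<close> i(1) by simp
  qed
  then show ?thesis using i by (auto simp: lex_le_def)
qed


lemma gen_code_is_code: "is_code n (gen_code r n M)"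
  unfolding is_code_def
proof (intro conjI ballI allI)
  show "gen_code r n M \<subseteq> vecs n" by (auto simp: gen_code_def vecs_def)
  show "(\<lambda>_. 0) \<in> gen_code r n M"
    unfolding gen_code_def by (rule CollectI, rule exI[of _ "\<lambda>_. 0"]) (auto simp: fun_eq_iff)
next
  fix u v assume "u \<in> gen_code r n M" "v \<in> gen_code r n M"
  then obtain c d where "u = (\<lambda>j. if j < n then (\<Sum>i<r. c i * M i j) else 0)"
      "v = (\<lambda>j. if j < n then (\<Sum>i<r. d i * M i j) else 0)" by (auto simp: gen_code_def)
  then show "(\<lambda>i. u i + v i) \<in> gen_code r n M"
    unfolding gen_code_def
    by (intro CollectI exI[of _ "\<lambda>i. c i + d i"]) (auto simp: fun_eq_iff distrib_right sum.distrib)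
next
  fix a :: z4 and v assume "v \<in> gen_code r n M"
  then obtain d where "v = (\<lambda>j. if j < n then (\<Sum>i<r. d i * M i j) else 0)" by (auto simp: gen_code_def)
  then show "(\<lambda>i. a * v i) \<in> gen_code r n M"
    unfolding gen_code_def
    by (intro CollectI exI[of _ "\<lambda>i. a * d i"]) (auto simp: fun_eq_iff sum_distrib_left mult.assoc)
qed


lemma gen_code_transform:
  assumes R: "R permutes {..<r}" and tau: "\<tau> permutes {..<n}"
    and G: "\<forall>i<r. \<forall>x<n. G i x = s x * G0 (R i) (\<tau> x)"
  shows "gen_code r n G = (\<lambda>v i. s i * v (\<tau> i)) ` gen_code r n G0"
proof -
  have key: "(\<lambda>i. s i * (if \<tau> i < n then (\<Sum>k<r. c k * G0 k (\<tau> i)) else 0))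
      = (\<lambda>j. if j < n then (\<Sum>k<r. c (R k) * G k j) else 0)" for c
  proof
    fix x
    show "s x * (if \<tau> x < n then (\<Sum>k<r. c k * G0 k (\<tau> x)) else 0)
      = (if x < n then (\<Sum>k<r. c (R k) * G k x) else 0)"
    proof (cases "x < n")
      case True
      hence tx: "\<tau> x < n" using permutes_in_image[OF tau] by simp
      have "(\<Sum>k<r. c (R k) * G k x) = (\<Sum>k<r. s x * (c (R k) * G0 (R k) (\<tau> x)))"
        using G True by (intro sum.cong) (auto simp: mult_ac)
      also have "\<dots> = s x * (\<Sum>k<r. (\<lambda>k. c k * G0 k (\<tau> x)) (R k))"
        by (simp add: sum_distrib_left)
      also have "(\<Sum>k<r. (\<lambda>k. c k * G0 k (\<tau> x)) (R k)) = (\<Sum>k<r. c k * G0 k (\<tau> x))"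
        using sum.permute[OF R, of "\<lambda>k. c k * G0 k (\<tau> x)"] by (simp add: comp_def)
      finally show ?thesis using True tx by simp
    next
      case False
      hence "\<tau> x = x" using tau by (auto simp: permutes_def)
      then show ?thesis using False by simp
    qed
  qed
  show ?thesis
  proof
    show "gen_code r n G \<subseteq> (\<lambda>v i. s i * v (\<tau> i)) ` gen_code r n G0"
    proof
      fix w assume "w \<in> gen_code r n G"
      then obtain c where w: "w = (\<lambda>j. if j < n then (\<Sum>k<r. c k * G k j) else 0)"
        by (auto simp: gen_code_def)
      define c' where "c' = c \<circ> inv R"
      have cR: "c' (R k) = c k" for k using permutes_inverses(2)[OF R] by (simp add: c'_def)
      have "w = (\<lambda>i. s i * (if \<tau> i < n then (\<Sum>k<r. c' k * G0 k (\<tau> i)) else 0))"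
        unfolding key w using cR by presburger
      thus "w \<in> (\<lambda>v i. s i * v (\<tau> i)) ` gen_code r n G0"
        unfolding gen_code_def by (intro image_eqI[of _ _ "(\<lambda>j. if j < n then (\<Sum>k<r. c' k * G0 k j) else 0)"]) auto
    qed
  next
    show "(\<lambda>v i. s i * v (\<tau> i)) ` gen_code r n G0 \<subseteq> gen_code r n G"
    proof
      fix w assume "w \<in> (\<lambda>v i. s i * v (\<tau> i)) ` gen_code r n G0"
      then obtain c where w: "w = (\<lambda>i. s i * (if \<tau> i < n then (\<Sum>k<r. c k * G0 k (\<tau> i)) else 0))"
        by (auto simp: gen_code_def)
      have "w = (\<lambda>j. if j < n then (\<Sum>k<r. (\<lambda>k. c (R k)) k * G k j) else 0)"
        unfolding w key by simp
      then show "w \<in> gen_code r n G" unfolding gen_code_def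
        by (intro CollectI exI[of _ "\<lambda>k. c (R k)"]) simp
    qed
  qed
qed

lemma code_equiv_trans:
  assumes "code_equiv n C C'" "code_equiv n C' C''"
  shows "code_equiv n C C''"
proof -
  obtain t1 s1 where 1: "t1 permutes {..<n}" "\<forall>i. s1 i = 1 \<or> s1 i = (-1::z4)"
    "C' = (\<lambda>v. \<lambda>i. s1 i * v (t1 i)) ` C" using assms(1) by (auto simp: code_equiv_def)
  obtain t2 s2 where 2: "t2 permutes {..<n}" "\<forall>i. s2 i = 1 \<or> s2 i = (-1::z4)"
    "C'' = (\<lambda>v. \<lambda>i. s2 i * v (t2 i)) ` C'" using assms(2) by (auto simp: code_equiv_def)
  have "C'' = (\<lambda>v. \<lambda>i. (s2 i * s1 (t2 i)) * v ((t1 \<circ> t2) i)) ` C"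
    unfolding 2(3) 1(3) image_image by (simp add: mult.assoc)
  moreover have "t1 \<circ> t2 permutes {..<n}" using 1 2 permutes_compose by blast
  moreover have "\<forall>i. s2 i * s1 (t2 i) = 1 \<or> s2 i * s1 (t2 i) = (-1::z4)"
    using 1(2) 2(2) by (metis mult.right_neutral mult_minus1 mult_minus1_right minus_minus)
  ultimately show ?thesis unfolding code_equiv_def
    by (intro exI[of _ "t1 \<circ> t2"] exI[of _ "\<lambda>i. s2 i * s1 (t2 i)"]) simp
qed

lemma perm_equiv_imp: "perm_equiv n C C' \<Longrightarrow> code_equiv n C C'"
  unfolding perm_equiv_def code_equiv_def
proof (elim exE conjE)
  fix \<sigma> assume "\<sigma> permutes {..<n}" "C' = (\<lambda>v. v \<circ> \<sigma>) ` C"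
  thus "\<exists>\<sigma> s. \<sigma> permutes {..<n} \<and> (\<forall>i. s i = 1 \<or> s i = (-1::z4))
      \<and> C' = (\<lambda>v. \<lambda>i. s i * v (\<sigma> i)) ` C"
    by (intro exI[of _ \<sigma>] exI[of _ "\<lambda>_. 1::z4"]) (simp add: comp_def)
qed


lemma z4_cases: "(v::4) = 0 \<or> v = 1 \<or> v = 2 \<or> v = 3"
proof (induct v)
  case (of_int z)
  then have "z = 0 \<or> z = 1 \<or> z = 2 \<or> z = 3" by auto
  then show ?case by auto
qed
lemma t1: "(-1::4) * 2 = 2" by simp
lemma t2: "(-1::4) * 3 = 1" by simp
lemma t3: "(0::4) \<noteq> 2 \<and> (1::4) \<noteq> 3 \<and> (1::4)\<noteq>2 \<and> (3::4) \<noteq> 0 \<and> (1::4) \<noteq> 0 \<and> (2::4) \<noteq> 3" by simp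
lemma t4: "(-1::4) \<noteq> 1" by simp


lemma shift_permutes:
  fixes k l :: nat
  assumes rho: "\<rho> permutes {..<l}"
  shows "(\<lambda>x. if k \<le> x \<and> x < k + l then k + \<rho> (x - k) else x) permutes {..<k + l}"
proof (rule bij_imp_permutes)
  let ?f = "\<lambda>x. if k \<le> x \<and> x < k + l then k + \<rho> (x - k) else x"
  let ?g = "\<lambda>x. if k \<le> x \<and> x < k + l then k + inv \<rho> (x - k) else x"
  have ri: "inv \<rho> permutes {..<l}" using permutes_inv[OF rho] .
  have r1: "\<And>y. y < l \<Longrightarrow> \<rho> y < l" using permutes_in_image[OF rho] by simp
  have r2: "\<And>y. y < l \<Longrightarrow> inv \<rho> y < l" using permutes_in_image[OF ri] by simp
  show "bij_betw ?f {..<k + l} {..<k + l}"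
  proof (rule bij_betw_byWitness[where f' = ?g])
    show "\<forall>a\<in>{..<k + l}. ?g (?f a) = a"
    proof
      fix a assume "a \<in> {..<k + l}"
      show "?g (?f a) = a"
      proof (cases "k \<le> a")
        case True
        hence "a - k < l" using \<open>a \<in> {..<k + l}\<close> by auto
        thus ?thesis using True r1[of "a - k"] permutes_inverses(2)[OF rho] by auto
      qed auto
    qed
    show "\<forall>a\<in>{..<k + l}. ?f (?g a) = a"
    proof
      fix a assume "a \<in> {..<k + l}"
      show "?f (?g a) = a"
      proof (cases "k \<le> a")
        case True
        hence "a - k < l" using \<open>a \<in> {..<k + l}\<close> by auto
        thus ?thesis using True r2[of "a - k"] permutes_inverses(1)[OF rho] by auto
      qed auto
    qed
    show "?f ` {..<k + l} \<subseteq> {..<k + l}"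
    proof (rule image_subsetI)
      fix a assume "a \<in> {..<k + l}"
      thus "?f a \<in> {..<k + l}" using r1[of "a - k"] by (cases "k \<le> a") auto
    qed
    show "?g ` {..<k + l} \<subseteq> {..<k + l}"
    proof (rule image_subsetI)
      fix a assume "a \<in> {..<k + l}"
      thus "?g a \<in> {..<k + l}" using r2[of "a - k"] by (cases "k \<le> a") auto
    qed
  qed
  show "\<And>x. x \<notin> {..<k + l} \<Longrightarrow> ?f x = x" by auto
qed



lemma zero_col:
  fixes n k1 k2 l j :: nat
  assumes nl: "n = k1 + k2 + l" and j: "j < l" and inS: "in_S k1 k2 l A B D"
    and z: "\<forall>i<k1+k2. stackBD k1 B D i j = 0"
  shows "\<exists>C0. is_code (n-1) C0 \<and> has_type (n-1) k1 k2 C0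
     \<and> code_equiv n (gen_code (k1+k2) n (Gmat k1 k2 A B D)) (trivial_ext n C0)"
proof -
  define r where "r = k1+k2"
  define t where "t = Transposition.transpose j (l-1)"
  define B' where "B' i x = B i (t x)" for i x
  define D' where "D' i x = D i (t x)" for i x
  define G' where "G' = Gmat k1 k2 A B' D'"
  define C0 where "C0 = gen_code r (n-1) G'"
  have l1: "n - 1 - k1 - k2 = l - 1" using nl by simp
  have tl: "x < l - 1 \<Longrightarrow> t x < l" for x using j by (auto simp: t_def transpose_def)
  have inS': "in_S k1 k2 (l-1) A B' D'"
    using inS tl by (auto simp: in_S_def mat_over_def D'_def)
  have ht: "has_type (n-1) k1 k2 C0"
    unfolding has_type_def l1
  proof (intro conjI exI)
    show "k1 + k2 \<le> n - 1" using nl j by simp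
    show "in_S k1 k2 (l-1) A B' D'" by (rule inS')
    show "perm_equiv (n - 1) (gen_code (k1 + k2) (n - 1) (Gmat k1 k2 A B' D')) C0"
      unfolding perm_equiv_def C0_def G'_def r_def
      by (intro exI[of _ id]) (simp add: permutes_id)
  qed
  have ic: "is_code (n-1) C0" unfolding C0_def by (rule gen_code_is_code)
  have triv: "trivial_ext n C0 = C0"
  proof -
    have h: "c \<in> C0 \<Longrightarrow> c(n - 1 := 0) = c" for c
      using ic by (auto simp: is_code_def vecs_def fun_eq_iff)
    show ?thesis unfolding trivial_ext_def
    proof (intro equalityI subsetI)
      fix x assume "x \<in> {c(n - 1 := 0) |c. c \<in> C0}"
      then obtain c where "x = c(n - 1 := 0)" "c \<in> C0" by blast
      thus "x \<in> C0" using h by simp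
    next
      fix x assume "x \<in> C0"
      thus "x \<in> {c(n - 1 := 0) |c. c \<in> C0}" using h[of x] by (intro CollectI exI[of _ x]) simp
    qed
  qed
  define M where "M i x = (if x < n-1 then G' i x else 0)" for i x
  have "C0 = gen_code r n M"
  proof -
    have "(\<lambda>x. if x < n-1 then (\<Sum>i<r. c i * G' i x) else 0) = (\<lambda>x. if x < n then (\<Sum>i<r. c i * M i x) else 0)" for c
      by (auto simp: M_def fun_eq_iff)
    thus ?thesis unfolding C0_def gen_code_def by simp
  qed
  define \<tau> where "\<tau> = Transposition.transpose (r + j) (n-1)"
  have \<tau>p: "\<tau> permutes {..<n}" unfolding \<tau>_def using nl j r_def by (intro permutes_swap_id) auto
  have MG: "\<forall>i<r. \<forall>x<n. M i x = 1 * Gmat k1 k2 A B D (id i) (\<tau> x)"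
  proof (intro allI impI)
    fix i x assume i: "i < r" and x: "x < n"
    show "M i x = 1 * Gmat k1 k2 A B D (id i) (\<tau> x)"
    proof (cases "x = n - 1")
      case True
      hence "\<tau> x = r + j" by (simp add: \<tau>_def)
      moreover have "stackBD k1 B D i j = 0" using z i r_def by simp
      ultimately show ?thesis using True by (auto simp: M_def Gmat_def stackBD_def r_def)
    next
      case False
      hence x1: "x < n - 1" using x by simp
      show ?thesis
      proof (cases "x = r + j")
        case True
        hence "\<tau> x = n - 1" by (simp add: \<tau>_def)
        moreover have "t j = l - 1" by (simp add: t_def)
        ultimately show ?thesis using True x1 nl
          by (auto simp: M_def Gmat_def G'_def B'_def D'_def r_def)
      next
        case False
        hence "\<tau> x = x" using x1 by (simp add: \<tau>_def transpose_def)
        moreover have "x \<ge> r \<Longrightarrow> t (x - r) = x - r" using False x1 nl r_def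
          by (auto simp: t_def transpose_def)
        ultimately show ?thesis using x1 nl
          by (auto simp: M_def Gmat_def G'_def B'_def D'_def r_def)
      qed
    qed
  qed
  have "C0 = (\<lambda>v i. 1 * v (\<tau> i)) ` gen_code r n (Gmat k1 k2 A B D)"
    unfolding \<open>C0 = gen_code r n M\<close>
    by (rule gen_code_transform[OF permutes_id \<tau>p MG])
  hence "code_equiv n (gen_code r n (Gmat k1 k2 A B D)) C0"
    unfolding code_equiv_def using \<tau>p by (intro exI[of _ \<tau>] exI[of _ "\<lambda>_. 1::z4"]) simp
  thus ?thesis using ic ht triv r_def by auto
qed

lemma perm_equiv_sym:
  assumes "perm_equiv n X C" shows "perm_equiv n C X"
proof -
  obtain \<sigma> where s: "\<sigma> permutes {..<n}" "C = (\<lambda>v. v \<circ> \<sigma>) ` X"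
    using assms by (auto simp: perm_equiv_def)
  have "(\<lambda>u. u \<circ> inv \<sigma>) ` C = X"
    unfolding s(2) image_image using permutes_inverses(1)[OF s(1)]
    by (simp add: comp_def)
  thus ?thesis unfolding perm_equiv_def using permutes_inv[OF s(1)] by blast
qed

lemma z4_02_mult: "v \<in> {0,2::z4} \<Longrightarrow> e = 1 \<or> e = -1 \<Longrightarrow> e * v \<in> {0,2}"
  by auto

lemma z4_02_mult_not: "(v::z4) \<notin> {0,2} \<Longrightarrow> e = 1 \<or> e = -1 \<Longrightarrow> e * v \<notin> {0,2}"
  using z4_cases[of v] by auto

lemma z4_fix3: "(if (v::z4) = 3 then -1 else 1) * v \<in> {0,1,2}"
  using z4_cases[of v] by auto

lemma z4_pm2: "e = 1 \<or> e = -1 \<Longrightarrow> e * (2 * (x::z4)) = 2 * x"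
  using z4_cases[of x] by auto

theorem mainTheorem12:
  fixes n k1 k2 l :: nat and C :: "z4vec set"
  assumes "k1 + k2 \<le> n"
    and "l = n - k1 - k2"
    and "is_code n C"
    and "has_type n k1 k2 C"
    and "\<not> (\<exists>C0. is_code (n - 1) C0 \<and> has_type (n - 1) k1 k2 C0
                  \<and> code_equiv n C (trivial_ext n C0))"
  shows "\<exists>C' A B D. is_code n C' \<and> has_type n k1 k2 C' \<and> code_equiv n C C'
           \<and> in_V k1 k2 l A B D
           \<and> C' = gen_code (k1 + k2) n (Gmat k1 k2 A B D)
           \<and> (\<forall>j<l. \<exists>i<k1 + k2. stackBD k1 B D i j \<noteq> 0)"
proof -
  define r where "r = k1 + k2"
  have nrl: "n = r + l" using assms(1,2) r_def by simp
  from assms(4) obtain A0 B0 D0 where inS0: "in_S k1 k2 l A0 B0 D0"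
    and pe: "perm_equiv n (gen_code r n (Gmat k1 k2 A0 B0 D0)) C"
    using assms(2) by (auto simp: has_type_def r_def)
  have ce0: "code_equiv n C (gen_code r n (Gmat k1 k2 A0 B0 D0))"
    using perm_equiv_sym[OF pe] perm_equiv_imp by blast
  obtain \<pi> where \<pi>: "\<pi> permutes {..<k1}"
    "\<forall>i<k1. \<forall>j<k1. i \<le> j \<longrightarrow> map (A0 (\<pi> i)) [0..<k2] \<le> map (A0 (\<pi> j)) [0..<k2]"
    using sort_perm_exists[of k1 "\<lambda>i. map (A0 i) [0..<k2]"] by auto
  define P where "P i \<longleftrightarrow> (\<exists>j<l. B0 (\<pi> i) j \<notin> {0,2})" for i
  define i0 where "i0 = (LEAST i. i < k1 \<and> P i)"
  define e where "e j = (if B0 (\<pi> i0) j = 3 then -1 else (1::z4))" for j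
  define B1 where "B1 i j = e j * B0 (\<pi> i) j" for i j
  define M1 where "M1 = stackBD k1 B1 D0"
  obtain \<rho> where \<rho>: "\<rho> permutes {..<l}"
    "\<forall>i<l. \<forall>j<l. i \<le> j \<longrightarrow> map (\<lambda>q. M1 q (\<rho> i)) [0..<r] \<le> map (\<lambda>q. M1 q (\<rho> j)) [0..<r]"
    using sort_perm_exists[of l "\<lambda>j. map (\<lambda>q. M1 q j) [0..<r]"] by auto
  define A where "A i j = A0 (\<pi> i) j" for i j
  define B where "B i j = B1 i (\<rho> j)" for i j
  define D where "D i j = D0 i (\<rho> j)" for i j
  define sh where "sh x = (if r \<le> x \<and> x < r + l then r + \<rho> (x - r) else x)" for x
  define \<tau> where "\<tau> = \<pi> \<circ> sh"
  define s where "s x = (if r \<le> x then e (\<rho> (x - r)) else 1)" for x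
  define C' where "C' = gen_code r n (Gmat k1 k2 A B D)"
  have \<pi>n: "\<pi> permutes {..<n}" using permutes_subset[OF \<pi>(1)] nrl r_def by auto
  have shp: "sh permutes {..<n}" unfolding sh_def nrl by (rule shift_permutes[OF \<rho>(1)])
  have \<tau>p: "\<tau> permutes {..<n}" unfolding \<tau>_def by (rule permutes_compose[OF shp \<pi>n])
  have \<pi>lt: "i < k1 \<Longrightarrow> \<pi> i < k1" for i using permutes_in_image[OF \<pi>(1)] by simp
  have \<pi>fix: "\<not> i < k1 \<Longrightarrow> \<pi> i = i" for i using permutes_not_in[OF \<pi>(1)] by simp
  have \<pi>inj: "\<pi> i = \<pi> x \<longleftrightarrow> i = x" for i x using permutes_inj[OF \<pi>(1)] by (auto dest: injD)
  have \<rho>lt: "j < l \<Longrightarrow> \<rho> j < l" for j using permutes_in_image[OF \<rho>(1)] by simp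
  have e_pm: "e j = 1 \<or> e j = -1" for j by (simp add: e_def)
  have s_pm: "\<forall>x. s x = 1 \<or> s x = -1" using e_pm by (simp add: s_def)
  have Gtr: "\<forall>i<r. \<forall>x<n. Gmat k1 k2 A B D i x = s x * Gmat k1 k2 A0 B0 D0 (\<pi> i) (\<tau> x)"
  proof (intro allI impI)
    fix i x assume i: "i < r" and x: "x < n"
    show "Gmat k1 k2 A B D i x = s x * Gmat k1 k2 A0 B0 D0 (\<pi> i) (\<tau> x)"
    proof (cases "x < r")
      case True
      hence "\<tau> x = \<pi> x" "s x = 1" by (simp_all add: \<tau>_def sh_def s_def)
      then show ?thesis using True i \<pi>lt \<pi>fix \<pi>inj
        by (cases "i < k1"; cases "x < k1") (auto simp: Gmat_def A_def r_def)
    next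
      case False
      have jl: "x - r < l" using False x nrl by simp
      hence "\<rho> (x - r) < l" by (rule \<rho>lt)
      have t: "\<tau> x = r + \<rho> (x - r)" using False x nrl \<pi>fix r_def by (simp add: \<tau>_def sh_def)
      have sx: "s x = e (\<rho> (x - r))" using False by (simp add: s_def)
      show ?thesis
      proof (cases "i < k1")
        case True
        then show ?thesis using False t sx \<pi>lt[OF True]
          by (auto simp: Gmat_def B_def B1_def r_def)
      next
        case False2: False
        then show ?thesis using False t sx \<pi>fix[OF False2] e_pm
          by (auto simp: Gmat_def D_def r_def z4_pm2)
      qed
    qed
  qed
  have C'eq: "C' = (\<lambda>v i. s i * v (\<tau> i)) ` gen_code r n (Gmat k1 k2 A0 B0 D0)"
  proof -
    have \<pi>r: "\<pi> permutes {..<r}" using permutes_subset[OF \<pi>(1)] r_def by auto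
    show ?thesis unfolding C'_def by (rule gen_code_transform[OF \<pi>r \<tau>p Gtr])
  qed
  have ce1: "code_equiv n (gen_code r n (Gmat k1 k2 A0 B0 D0)) C'"
    unfolding code_equiv_def using \<tau>p s_pm C'eq by blast
  have ce: "code_equiv n C C'" by (rule code_equiv_trans[OF ce0 ce1])
  have inS: "in_S k1 k2 l A B D"
    using inS0 \<pi>lt \<rho>lt by (auto simp: in_S_def mat_over_def A_def D_def)
  have Prow: "P_row k1 k2 A"
    unfolding P_row_def A_def using \<pi>(2) lex_from_list by blast
  have Bset: "in_Bset k1 l B"
  proof (cases "\<exists>i. i < k1 \<and> P i")
    case True
    have i0: "i0 < k1 \<and> P i0" unfolding i0_def by (rule LeastI_ex[OF True])
    have before: "\<And>i'. i' < i0 \<Longrightarrow> \<not> (i' < k1 \<and> P i')"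
      unfolding i0_def by (rule not_less_Least)
    show ?thesis unfolding in_Bset_def
    proof (rule disjI2, rule exI[of _ i0], intro conjI allI impI)
      show "i0 < k1" using i0 by simp
      fix i' j assume "i' < i0" "j < l"
      hence "B0 (\<pi> i') (\<rho> j) \<in> {0,2}" using before[of i'] i0 \<rho>lt[of j] by (auto simp: P_def)
      thus "B i' j \<in> {0,2}" unfolding B_def B1_def by (rule z4_02_mult[OF _ e_pm])
    next
      obtain j0 where j0: "j0 < l" "B0 (\<pi> i0) j0 \<notin> {0,2}" using i0 by (auto simp: P_def)
      have "inv \<rho> j0 < l" using permutes_in_image[OF permutes_inv[OF \<rho>(1)]] j0 by simp
      moreover have "\<rho> (inv \<rho> j0) = j0" using permutes_inverses(1)[OF \<rho>(1)] by simp
      ultimately show "\<exists>j<l. B i0 j \<notin> {0,2}" using j0 z4_02_mult_not[OF j0(2) e_pm]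
        unfolding B_def B1_def by metis
    next
      fix j assume "j < l"
      show "B i0 j \<in> {0,1,2}" unfolding B_def B1_def e_def by (rule z4_fix3)
    qed
  next
    case False
    show ?thesis unfolding in_Bset_def
    proof (rule disjI1)
      show "mat_over k1 l {0, 2} B" unfolding mat_over_def
      proof (intro allI impI)
        fix i j assume "i < k1" "j < l"
        hence "B0 (\<pi> i) (\<rho> j) \<in> {0,2}" using False \<rho>lt[of j] by (auto simp: P_def)
        thus "B i j \<in> {0,2}" unfolding B_def B1_def by (rule z4_02_mult[OF _ e_pm])
      qed
    qed
  qed
  have stk: "stackBD k1 B D = (\<lambda>q j. M1 q (\<rho> j))"
    by (auto simp: fun_eq_iff stackBD_def M1_def B_def D_def)
  have Pcol: "P_col (k1 + k2) l (stackBD k1 B D)"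
    unfolding P_col_def stk using \<rho>(2) lex_from_list r_def by blast
  have inV: "in_V k1 k2 l A B D"
    using inS Prow Bset Pcol by (simp add: in_V_def in_U_def in_T_def)
  have nz: "\<forall>j<l. \<exists>i<k1 + k2. stackBD k1 B D i j \<noteq> 0"
  proof (rule ccontr)
    assume "\<not> (\<forall>j<l. \<exists>i<k1 + k2. stackBD k1 B D i j \<noteq> 0)"
    then obtain j where j: "j < l" "\<forall>i<k1 + k2. stackBD k1 B D i j = 0" by auto
    obtain C0 where C0: "is_code (n-1) C0" "has_type (n-1) k1 k2 C0"
      "code_equiv n C' (trivial_ext n C0)"
      using zero_col[OF _ j(1) inS j(2), of n] nrl r_def C'_def by auto
    have "code_equiv n C (trivial_ext n C0)" by (rule code_equiv_trans[OF ce C0(3)])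
    thus False using assms(5) C0 by blast
  qed
  have ht: "has_type n k1 k2 C'"
    unfolding has_type_def
  proof (intro conjI exI)
    show "k1 + k2 \<le> n" by (rule assms(1))
    show "in_S k1 k2 (n - k1 - k2) A B D" using inS assms(2) by simp
    show "perm_equiv n (gen_code (k1 + k2) n (Gmat k1 k2 A B D)) C'"
      unfolding perm_equiv_def C'_def r_def by (intro exI[of _ id]) (simp add: permutes_id)
  qed
  show ?thesis
    using gen_code_is_code[of n r "Gmat k1 k2 A B D"] ht ce inV nz
    by (intro exI[of _ C'] exI[of _ A] exI[of _ B] exI[of _ D]) (simp add: C'_def r_def)
qed

end
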